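(* For every set $X \subseteq \mathbb N$ of natural numbers there exists a (countable) homogeneous relational structure $\mathbb A_X$ such that membership in $X$ is many-one reducible (by a computable reduction) to the induced substructure problem for $\mathbb A_X$.
   Context: A relational structure $\mathbb A$ is homogeneous if every isomorphism between two finite induced substructures of $\mathbb A$ extends to an automorphism of $\mathbb A$. The induced substructure problem for $\mathbb A$ asks, given a finite structure over the same vocabulary, whether it is isomorphic to an induced substructure of $\mathbb A$. *)

theory Defs
  imports Main "HOL-Library.Nat_Bijection"
begin

datatype recf = Zero | Succ | Proj nat | Comp recf "recf list" | Prim recf recf | Mn recf

inductive evalr :: "recf \<Rightarrow> nat list \<Rightarrow> nat \<Rightarrow> bool" where
  ev_zero: "evalr Zero xs 0"
| ev_succ: "evalr Succ (x # xs) (Suc x)"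
| ev_proj: "i < length xs \<Longrightarrow> evalr (Proj i) xs (xs ! i)"
| ev_comp: "list_all2 (\<lambda>g y. evalr g xs y) gs ys \<Longrightarrow> evalr f ys z \<Longrightarrow> evalr (Comp f gs) xs z"
| ev_prim0: "evalr f xs z \<Longrightarrow> evalr (Prim f g) (0 # xs) z"
| ev_primS: "evalr (Prim f g) (n # xs) y \<Longrightarrow> evalr g (y # n # xs) z
             \<Longrightarrow> evalr (Prim f g) (Suc n # xs) z"
| ev_mn: "evalr f (n # xs) 0 \<Longrightarrow> (\<forall>m<n. \<exists>k. evalr f (m # xs) (Suc k))
          \<Longrightarrow> evalr (Mn f) xs n"

definition computable :: "(nat \<Rightarrow> nat) \<Rightarrow> bool" where
  "computable f \<longleftrightarrow> (\<exists>r. \<forall>n. evalr r [n] (f n))"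

text \<open>A (finite) relational vocabulary is a list of arities: symbol i < length sig has arity sig!i.
  A structure has a carrier set and an interpretation of each symbol as a predicate on tuples.\<close>
record 'a rstruct =
  carrier :: "'a set"
  rel :: "nat \<Rightarrow> 'a list \<Rightarrow> bool"

definition struct_on :: "nat list \<Rightarrow> 'a rstruct \<Rightarrow> bool" where
  "struct_on sig A \<longleftrightarrow> (\<forall>i xs. rel A i xs \<longrightarrow>
      i < length sig \<and> length xs = sig ! i \<and> set xs \<subseteq> carrier A)"

definition partial_iso :: "nat list \<Rightarrow> 'a rstruct \<Rightarrow> ('a \<Rightarrow> 'a) \<Rightarrow> 'a set \<Rightarrow> 'a set \<Rightarrow> bool" where
  "partial_iso sig A h S T \<longleftrightarrow> S \<subseteq> carrier A \<and> T \<subseteq> carrier A \<and> bij_betw h S T \<and>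
     (\<forall>i < length sig. \<forall>xs. length xs = sig ! i \<and> set xs \<subseteq> S \<longrightarrow>
        (rel A i xs \<longleftrightarrow> rel A i (map h xs)))"

definition automorphism :: "nat list \<Rightarrow> 'a rstruct \<Rightarrow> ('a \<Rightarrow> 'a) \<Rightarrow> bool" where
  "automorphism sig A g \<longleftrightarrow> partial_iso sig A g (carrier A) (carrier A)"

definition homogeneous :: "nat list \<Rightarrow> 'a rstruct \<Rightarrow> bool" where
  "homogeneous sig A \<longleftrightarrow> (\<forall>h S T. finite S \<and> finite T \<and> partial_iso sig A h S T \<longrightarrow>
      (\<exists>g. automorphism sig A g \<and> (\<forall>x\<in>S. g x = h x)))"

definition embeds :: "nat list \<Rightarrow> 'b rstruct \<Rightarrow> 'a rstruct \<Rightarrow> bool" where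
  "embeds sig B A \<longleftrightarrow> (\<exists>e. inj_on e (carrier B) \<and> e ` carrier B \<subseteq> carrier A \<and>
     (\<forall>i < length sig. \<forall>xs. length xs = sig ! i \<and> set xs \<subseteq> carrier B \<longrightarrow>
        (rel B i xs \<longleftrightarrow> rel A i (map e xs))))"

text \<open>A code c = prod_encode (n, list_encode [r_0, ..., r_k]) denotes the structure with
  carrier {0..<n}, where relation i holds of a tuple xs iff xs has the right arity, entries
  below n, and list_encode xs occurs in list_decode r_i. Every natural number decodes to a
  finite sig-structure, and every finite sig-structure on {0..<n} arises (up to iso, all do).\<close>
definition decode_struct :: "nat list \<Rightarrow> nat \<Rightarrow> nat rstruct" where
  "decode_struct sig c = (let (n, r) = prod_decode c; rl = list_decode r in
     \<lparr> carrier = {..<n},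
       rel = (\<lambda>i xs. i < length sig \<and> i < length rl \<and> length xs = sig ! i \<and>
                     set xs \<subseteq> {..<n} \<and> list_encode xs \<in> set (list_decode (rl ! i))) \<rparr>)"

definition ISP :: "nat list \<Rightarrow> 'a rstruct \<Rightarrow> nat set" where
  "ISP sig A = {c. embeds sig (decode_struct sig c) A}"

definition many_one_reducible :: "nat set \<Rightarrow> nat set \<Rightarrow> bool" where
  "many_one_reducible X Y \<longleftrightarrow> (\<exists>f. computable f \<and> (\<forall>n. n \<in> X \<longleftrightarrow> f n \<in> Y))"

end

theory Submission
  imports Defs
begin


lemma ev_comp1: "evalr g xs y \<Longrightarrow> evalr f [y] z \<Longrightarrow> evalr (Comp f [g]) xs z"
  by (rule ev_comp[where ys="[y]"]) auto
lemma ev_comp2: "evalr g1 xs y1 \<Longrightarrow> evalr g2 xs y2 \<Longrightarrow> evalr f [y1,y2] z \<Longrightarrow> evalr (Comp f [g1,g2]) xs z"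
  by (rule ev_comp[where ys="[y1,y2]"]) auto

lemma ev_prim_all:
  assumes "evalr f xs (F 0)" "\<And>n. evalr g (F n # n # xs) (F (Suc n))"
  shows "evalr (Prim f g) (n # xs) (F n)"
  by (induction n) (auto intro: evalr.intros assms)

lemma ev_succ': "evalr g xs y \<Longrightarrow> evalr (Comp Succ [g]) xs (Suc y)"
  by (rule ev_comp1) (auto intro: evalr.intros)

lemma ev_projI: "i < length xs \<Longrightarrow> v = xs ! i \<Longrightarrow> evalr (Proj i) xs v"
  by (simp add: ev_proj)

lemma ev_zeroI: "v = 0 \<Longrightarrow> evalr Zero xs v" by (simp add: ev_zero)

lemmas evI = ev_succ ev_comp1 ev_comp2 ev_succ' ev_projI ev_zeroI

definition "addr = Prim (Proj 0) (Comp Succ [Proj 0])"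
lemma ev_add: "evalr addr [a,b] (a+b)"
  unfolding addr_def
  by (rule ev_prim_all[where F="\<lambda>a. a+b"]) (auto intro!: evI)

lemma ev_addI: "evalr g1 xs a \<Longrightarrow> evalr g2 xs b \<Longrightarrow> v = a + b \<Longrightarrow> evalr (Comp addr [g1,g2]) xs v"
  using ev_comp2 ev_add by blast

definition "trir = Prim Zero (Comp addr [Proj 0, Comp Succ [Proj 1]])"
lemma ev_tri: "evalr trir [a] (triangle a)"
  unfolding trir_def
  by (rule ev_prim_all[where F="triangle"]) (auto intro!: evI ev_addI)

lemma ev_triI: "evalr g xs a \<Longrightarrow> v = triangle a \<Longrightarrow> evalr (Comp trir [g]) xs v"
  using ev_comp1 ev_tri by blast

definition "per = Comp addr [Comp trir [Comp addr [Proj 0, Proj 1]], Proj 0]"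
lemma ev_pe: "evalr per [a,b] (prod_encode (a,b))"
  unfolding per_def prod_encode_def
  by (auto intro!: evI ev_addI ev_triI)

lemma ev_peI: "evalr g1 xs a \<Longrightarrow> evalr g2 xs b \<Longrightarrow> v = prod_encode (a,b) \<Longrightarrow> evalr (Comp per [g1,g2]) xs v"
  using ev_comp2 ev_pe by blast

primrec qlist :: "nat \<Rightarrow> nat list list" where
  "qlist 0 = []" | "qlist (Suc j) = [j, Suc j] # qlist j"

definition "qr = Prim Zero (Comp Succ [Comp per [Comp Succ [Comp per [Proj 1, Comp Succ [Comp per [Comp Succ [Proj 1], Zero]]]], Proj 0]])"

lemma ev_q: "evalr qr [j] (list_encode (map list_encode (qlist j)))"
  unfolding qr_def
  by (rule ev_prim_all[where F="\<lambda>j. list_encode (map list_encode (qlist j))"]) (auto intro!: evI ev_peI)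

definition cyc :: "nat \<Rightarrow> nat list list" where "cyc n = [n-1, 0] # qlist (n-1)"

definition fcode :: "nat \<Rightarrow> nat" where
  "fcode k = prod_encode (k+3, list_encode [list_encode (map list_encode (cyc (k+3)))])"

definition "fr = Comp per [Comp Succ [Comp Succ [Comp Succ [Proj 0]]],
   Comp Succ [Comp per [Comp Succ [Comp per [Comp Succ [Comp per [Comp Succ [Comp Succ [Proj 0]], Comp Succ [Comp per [Zero, Zero]]]],
      Comp qr [Comp Succ [Comp Succ [Proj 0]]]]], Zero]]]"

lemma ev_q_I: "evalr g xs a \<Longrightarrow> v = list_encode (map list_encode (qlist a)) \<Longrightarrow> evalr (Comp qr [g]) xs v"
  using ev_comp1 ev_q by blast

lemma computable_fcode: "computable fcode"
  unfolding computable_def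
proof (intro exI allI)
  fix n show "evalr fr [n] (fcode n)"
    unfolding fr_def fcode_def cyc_def
    by (auto intro!: evI ev_peI ev_q_I simp: numeral_eq_Suc)
qed



definition CR :: "nat \<Rightarrow> nat \<Rightarrow> nat \<Rightarrow> bool" where "CR n x y \<longleftrightarrow> x < n \<and> y = Suc x mod n"
definition bad :: "nat set \<Rightarrow> nat \<Rightarrow> bool" where "bad X m \<longleftrightarrow> 3 \<le> m \<and> m - 3 \<notin> X"
definition copy :: "(nat \<Rightarrow> nat \<Rightarrow> bool) \<Rightarrow> nat set \<Rightarrow> nat \<Rightarrow> (nat \<Rightarrow> nat) \<Rightarrow> bool" where
  "copy R D m e \<longleftrightarrow> inj_on e {..<m} \<and> e ` {..<m} \<subseteq> D \<and> (\<forall>i<m. \<forall>j<m. R (e i) (e j) \<longleftrightarrow> CR m i j)"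
definition good :: "nat set \<Rightarrow> (nat \<Rightarrow> nat \<Rightarrow> bool) \<Rightarrow> nat set \<Rightarrow> bool" where
  "good X R D \<longleftrightarrow> \<not> (\<exists>m e. bad X m \<and> copy R D m e)"

lemma copy_transfer0:
  assumes "copy R D m e" "e ` {..<m} \<subseteq> D'" "\<And>x y. x \<in> e ` {..<m} \<Longrightarrow> y \<in> e ` {..<m} \<Longrightarrow> R x y = R2 x y"
  shows "copy R2 D' m e"
  unfolding copy_def
proof (intro conjI allI impI)
  show "inj_on e {..<m}" using assms(1) unfolding copy_def by blast
  show "e ` {..<m} \<subseteq> D'" by (rule assms(2))
  fix i j assume ij: "i < m" "j < m"
  have "R (e i) (e j) = CR m i j" using assms(1) ij unfolding copy_def by blast
  moreover have "R (e i) (e j) = R2 (e i) (e j)" using ij by (intro assms(3)) auto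
  ultimately show "R2 (e i) (e j) = CR m i j" by simp
qed

lemma good_mono:
  assumes "good X R D" "D' \<subseteq> D" "\<And>x y. x \<in> D' \<Longrightarrow> y \<in> D' \<Longrightarrow> R' x y = R x y"
  shows "good X R' D'"
  unfolding good_def
proof
  assume "\<exists>m e. bad X m \<and> copy R' D' m e"
  then obtain m e where b: "bad X m" and c: "copy R' D' m e" by blast
  have sub: "e ` {..<m} \<subseteq> D'" using c unfolding copy_def by blast
  have "copy R D m e"
  proof (rule copy_transfer0[OF c])
    show "e ` {..<m} \<subseteq> D" using sub assms(2) by blast
    fix x y assume "x \<in> e ` {..<m}" "y \<in> e ` {..<m}"
    then have "x \<in> D'" "y \<in> D'" using sub by blast+
    then show "R' x y = R x y" by (rule assms(3))
  qed
  then show False using b assms(1) unfolding good_def by blast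
qed

lemma good_iso:
  assumes "good X R1 D1" "bij_betw \<phi> D1 D2" "\<And>x y. x \<in> D1 \<Longrightarrow> y \<in> D1 \<Longrightarrow> R1 x y = R2 (\<phi> x) (\<phi> y)"
  shows "good X R2 D2"
  unfolding good_def
proof
  assume "\<exists>m e. bad X m \<and> copy R2 D2 m e"
  then obtain m e where b: "bad X m" and c: "copy R2 D2 m e" by blast
  define \<psi> where "\<psi> = inv_into D1 \<phi>"
  have bij: "bij_betw \<psi> D2 D1" unfolding \<psi>_def by (rule bij_betw_inv_into[OF assms(2)])
  have ed: "e ` {..<m} \<subseteq> D2" using c unfolding copy_def by blast
  have "copy R1 D1 m (\<psi> \<circ> e)"
    unfolding copy_def
  proof (intro conjI allI impI)
    have ie: "inj_on e {..<m}" using c copy_def by blast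
    have ip: "inj_on \<psi> D2" using bij bij_betw_def by blast
    show "inj_on (\<psi> \<circ> e) {..<m}"
      by (rule comp_inj_on[OF ie inj_on_subset[OF ip ed]])
    show "(\<psi> \<circ> e) ` {..<m} \<subseteq> D1"
    proof
      fix z assume "z \<in> (\<psi> \<circ> e) ` {..<m}"
      then obtain i where "i < m" "z = \<psi> (e i)" by auto
      moreover have "e i \<in> D2" using ed \<open>i < m\<close> by auto
      ultimately show "z \<in> D1" using bij_betw_apply[OF bij] by simp
    qed
    fix i j assume ij: "i < m" "j < m"
    have ei: "e i \<in> D2" "e j \<in> D2" using ed ij by auto
    have "\<phi> (\<psi> (e i)) = e i" "\<phi> (\<psi> (e j)) = e j"
      unfolding \<psi>_def using ei by (simp_all add: bij_betw_inv_into_right[OF assms(2)])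
    moreover have "\<psi> (e i) \<in> D1" "\<psi> (e j) \<in> D1" using ei bij_betw_apply[OF bij] by simp_all
    ultimately have "R1 ((\<psi> \<circ> e) i) ((\<psi> \<circ> e) j) = R2 (e i) (e j)" using assms(3)[of "\<psi> (e i)" "\<psi> (e j)"] by simp
    moreover have "R2 (e i) (e j) = CR m i j" using c ij unfolding copy_def by blast
    ultimately show "R1 ((\<psi> \<circ> e) i) ((\<psi> \<circ> e) j) = CR m i j" by simp
  qed
  then show False using assms(1) b unfolding good_def by blast
qed

lemma cr_noloop: "2 \<le> m \<Longrightarrow> \<not> CR m i i"
  unfolding CR_def
proof
  assume "2 \<le> m" "i < m \<and> i = Suc i mod m"
  then show False
    by (cases "Suc i < m") (auto simp: mod_if split: if_splits)
qed

lemma cr_no2: assumes "3 \<le> m" "CR m i j" "CR m j i" shows False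
proof -
  have im: "i < m" and e: "i = Suc (Suc i mod m) mod m" using assms unfolding CR_def by auto
  show False
  proof (cases "Suc i < m")
    case True
    then have "Suc i mod m = Suc i" by simp
    with e have "i = Suc (Suc i) mod m" by simp
    then show ?thesis
    proof (cases "Suc (Suc i) < m")
      case True then show ?thesis using \<open>i = Suc (Suc i) mod m\<close> by simp
    next
      case False
      then have "Suc (Suc i) = m" using \<open>Suc i < m\<close> by simp
      then show ?thesis using \<open>i = Suc (Suc i) mod m\<close> assms(1) by simp
    qed
  next
    case False
    then have "Suc i = m" using im by simp
    then have "Suc i mod m = 0" by simp
    with e have "i = 1 mod m" by simp
    then show ?thesis using assms(1) \<open>Suc i = m\<close> by simp
  qed
qed

lemma antichain:
  assumes m3: "3 \<le> m" and c: "copy (CR n) {..<n} m e"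
  shows "m = n"
proof -
  have inj: "inj_on e {..<m}" and rng: "e ` {..<m} \<subseteq> {..<n}"
    and rel: "\<And>i j. i < m \<Longrightarrow> j < m \<Longrightarrow> CR n (e i) (e j) = CR m i j"
    using c unfolding copy_def by auto
  have en: "\<And>i. i < m \<Longrightarrow> e i < n" using rng by auto
  have step: "e (Suc i mod m) = Suc (e i) mod n" if "i < m" for i
  proof -
    have "CR m i (Suc i mod m)" using that unfolding CR_def by simp
    then have "CR n (e i) (e (Suc i mod m))" using rel that m3 by simp
    then show ?thesis unfolding CR_def by simp
  qed
  have lin: "i < m \<Longrightarrow> e i = (e 0 + i) mod n" for i
  proof (induction i)
    case 0 then show ?case using en m3 by simp
  next
    case (Suc i)
    have "e (Suc i mod m) = Suc (e i) mod n" by (rule step) (use Suc in simp)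
    then have "e (Suc i) = Suc (e i) mod n" using Suc.prems by simp
    also have "\<dots> = Suc ((e 0 + i) mod n) mod n" using Suc.IH Suc.prems by simp
    also have "\<dots> = (e 0 + Suc i) mod n" by (simp only: mod_Suc_eq add_Suc_right)
    finally show ?case .
  qed
  have m1: "m - 1 < m" "Suc (m - 1) mod m = 0" using m3 by auto
  have "e (Suc (m - 1) mod m) = Suc (e (m - 1)) mod n" by (rule step[OF m1(1)])
  then have "e 0 = Suc (e (m - 1)) mod n" unfolding m1(2) .
  also have "\<dots> = Suc ((e 0 + (m - 1)) mod n) mod n" by (subst lin[OF m1(1)]) (rule refl)
  also have "\<dots> = Suc (e 0 + (m - 1)) mod n" by (simp only: mod_Suc_eq)
  also have "\<dots> = (e 0 + m) mod n" using m3 by simp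
  finally have "(e 0 + m) mod n = e 0 mod n" using en m3 by simp
  then have "n dvd (e 0 + m) - e 0" using mod_eq_dvd_iff_nat[of "e 0" "e 0 + m" n] by simp
  then have dv: "n dvd m" by simp
  have "card {..<m} \<le> card {..<n}" using card_inj_on_le[OF inj rng] by simp
  then have "m \<le> n" by simp
  moreover have "n \<le> m" using dv m3 by (simp add: dvd_imp_le)
  ultimately show ?thesis by simp
qed



lemma copy_transfer:
  assumes "copy R D m e" "e ` {..<m} \<subseteq> D'" "\<And>x y. x \<in> D' \<Longrightarrow> y \<in> D' \<Longrightarrow> R x y = R2 x y"
  shows "copy R2 D' m e"
  using assms unfolding copy_def by (simp add: image_subset_iff)

definition ext :: "(nat\<Rightarrow>nat\<Rightarrow>bool) \<Rightarrow> nat set \<Rightarrow> nat set \<Rightarrow> nat set \<Rightarrow> bool \<Rightarrow> nat \<Rightarrow> nat \<Rightarrow> nat \<Rightarrow> bool" where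
  "ext R S Os Is l p x y = (if x = p then (if y = p then l else y \<in> Os) else if y = p then x \<in> Is else R x y)"

definition req :: "nat \<Rightarrow> nat set \<times> nat set \<times> nat set \<times> bool" where
  "req n = (let r = fst (prod_decode n); (a, r2) = prod_decode r; (b, r3) = prod_decode r2; (c, d) = prod_decode r3
            in (set (list_decode a), set (list_decode b), set (list_decode c), d = 0))"

definition valid :: "nat set \<Rightarrow> (nat\<times>nat) set \<Rightarrow> nat \<Rightarrow> bool" where
  "valid X P n = (case req n of (S, Os, Is, l) \<Rightarrow>
      S \<subseteq> {..<n} \<and> good X (ext (\<lambda>x y. (x,y) \<in> P) S Os Is l n) (insert n S))"

definition cand :: "nat \<Rightarrow> nat \<Rightarrow> nat \<Rightarrow> bool" where
  "cand n x y = (case req n of (S, Os, Is, l) \<Rightarrow>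
      if x = n \<and> y = n then l else if x = n then (y \<in> S \<longrightarrow> y \<in> Os) else (x \<in> S \<longrightarrow> x \<in> Is))"

primrec G :: "nat set \<Rightarrow> nat \<Rightarrow> (nat \<times> nat) set" where
  "G X 0 = {}"
| "G X (Suc n) = {(x,y). x \<le> n \<and> y \<le> n \<and>
     (if x < n \<and> y < n then (x,y) \<in> G X n else if valid X (G X n) n then cand n x y else True)}"

lemma G_sub: "(x,y) \<in> G X n \<Longrightarrow> x < n \<and> y < n"
  by (cases n) auto

lemma G_Suc_low: "x < n \<Longrightarrow> y < n \<Longrightarrow> (x,y) \<in> G X (Suc n) \<longleftrightarrow> (x,y) \<in> G X n"
  by simp

lemma G_mono: assumes "x < n" "y < n" "n \<le> k" shows "(x,y) \<in> G X k \<longleftrightarrow> (x,y) \<in> G X n"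
  using assms(3)
proof (induction k rule: dec_induct)
  case base then show ?case by simp
next
  case (step k) then show ?case using G_Suc_low[of x k y X] assms by simp
qed

definition Rl :: "nat set \<Rightarrow> nat \<Rightarrow> nat \<Rightarrow> bool" where
  "Rl X x y \<longleftrightarrow> (x,y) \<in> G X (Suc (max x y))"

lemma Rl_G: "max x y < k \<Longrightarrow> Rl X x y \<longleftrightarrow> (x,y) \<in> G X k"
  unfolding Rl_def by (rule G_mono[symmetric]) auto

lemma G_good: "good X (\<lambda>x y. (x,y) \<in> G X n) {..<n}"
proof (induction n)
  case 0 show ?case unfolding good_def copy_def bad_def by (auto simp: lessThan_empty_iff)
next
  case (Suc n)
  let ?Rn = "\<lambda>x y. (x,y) \<in> G X n"
  let ?R = "\<lambda>x y. (x,y) \<in> G X (Suc n)"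
  show ?case unfolding good_def
  proof
    assume "\<exists>m e. bad X m \<and> copy ?R {..<Suc n} m e"
    then obtain m e where b: "bad X m" and c: "copy ?R {..<Suc n} m e" by blast
    have m3: "3 \<le> m" using b bad_def by simp
    have rng: "e ` {..<m} \<subseteq> {..<Suc n}" and rel: "\<And>i j. i < m \<Longrightarrow> j < m \<Longrightarrow> ?R (e i) (e j) = CR m i j"
      using c copy_def by auto
    show False
    proof (cases "n \<in> e ` {..<m}")
      case False
      have "e ` {..<m} \<subseteq> {..<n}"
      proof
        fix z assume "z \<in> e ` {..<m}"
        then have "z < Suc n" "z \<noteq> n" using rng False by auto
        then show "z \<in> {..<n}" by simp
      qed
      then have "copy ?Rn {..<n} m e" by (rule copy_transfer[OF c]) simp
      then show False using Suc.IH b good_def by blast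
    next
      case True
      then obtain i0 where i0: "i0 < m" "e i0 = n" by auto
      show False
      proof (cases "valid X (G X n) n")
        case False
        then have "?R n n" by simp
        then have "CR m i0 i0" using rel[OF i0(1) i0(1)] i0 by simp
        then show False using cr_noloop m3 by simp
      next
        case v: True
        obtain S Os Is l where rq: "req n = (S, Os, Is, l)" by (cases "req n") auto
        have vv: "S \<subseteq> {..<n}" "good X (ext ?Rn S Os Is l n) (insert n S)"
          using v rq unfolding valid_def by auto
        show False
        proof (cases "e ` {..<m} \<subseteq> insert n S")
          case True
          have "copy (ext ?Rn S Os Is l n) (insert n S) m e"
          proof (rule copy_transfer[OF c True])
            fix x y assume xy: "x \<in> insert n S" "y \<in> insert n S"
            then have "x \<le> n" "y \<le> n" using vv(1) by auto
            then show "?R x y = ext ?Rn S Os Is l n x y"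
              using v rq xy vv(1) unfolding ext_def by (auto simp: less_le cand_def)
          qed
          then show False using vv(2) b good_def by blast
        next
          case False
          then obtain j where j: "j < m" "e j \<notin> insert n S" by auto
          then have ejn: "e j < n" using rng by (auto simp: less_Suc_eq)
          have "?R n (e j)" "?R (e j) n" using v rq j ejn by (auto simp: cand_def)
          then have "CR m i0 j" "CR m j i0" using rel[OF i0(1) j(1)] rel[OF j(1) i0(1)] i0 by auto
          then show False using cr_no2 m3 by blast
        qed
      qed
    qed
  qed
qed

lemma Rl_good: "good X (Rl X) UNIV"
  unfolding good_def
proof
  assume "\<exists>m e. bad X m \<and> copy (Rl X) UNIV m e"
  then obtain m e where b: "bad X m" and c: "copy (Rl X) UNIV m e" by blast
  define N where "N = Suc (Max (e ` {..<m}))"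
  have fin: "finite (e ` {..<m})" by simp
  have sub: "e ` {..<m} \<subseteq> {..<N}" unfolding N_def using Max_ge[OF fin] by (auto simp: less_Suc_eq_le)
  have "copy (\<lambda>x y. (x,y) \<in> G X N) {..<N} m e"
    by (rule copy_transfer[OF c sub]) (simp add: Rl_G)
  then show False using G_good b good_def by blast
qed



lemma EP0:
  assumes fin: "finite S" and Os: "Os \<subseteq> S" and Is: "Is \<subseteq> S" and p: "p \<notin> S"
    and g: "good X (ext (Rl X) S Os Is l p) (insert p S)"
  shows "\<exists>a. a \<notin> S \<and> (\<forall>s\<in>S. Rl X a s \<longleftrightarrow> s \<in> Os) \<and> (\<forall>s\<in>S. Rl X s a \<longleftrightarrow> s \<in> Is) \<and> (Rl X a a \<longleftrightarrow> l)"
proof -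
  obtain as where as: "set as = S" using finite_list fin by blast
  obtain bs where bs: "set bs = Os" using finite_list finite_subset[OF Os fin] by blast
  obtain cs where cs: "set cs = Is" using finite_list finite_subset[OF Is fin] by blast
  define d :: nat where "d = (if l then 0 else 1)"
  define r where "r = prod_encode (list_encode as, prod_encode (list_encode bs, prod_encode (list_encode cs, d)))"
  define j where "j = Suc (Max (insert 0 S))"
  define n where "n = prod_encode (r, j)"
  have jn: "j \<le> n" unfolding n_def by (rule le_prod_encode_2)
  have Sn: "S \<subseteq> {..<n}"
  proof
    fix s assume "s \<in> S"
    then have "s \<le> Max (insert 0 S)" using fin by simp
    then show "s \<in> {..<n}" using jn j_def by simp
  qed
  have nS: "n \<notin> S" using Sn by auto
  have rq: "req n = (S, Os, Is, l)"
    unfolding req_def n_def r_def using as bs cs d_def by (simp add: Let_def)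
  have bij: "bij_betw (id(p:=n)) (insert p S) (insert n S)"
    unfolding bij_betw_def inj_on_def using p nS by auto
  have "good X (ext (\<lambda>x y. (x,y) \<in> G X n) S Os Is l n) (insert n S)"
  proof (rule good_iso[OF g bij])
    fix x y assume xy: "x \<in> insert p S" "y \<in> insert p S"
    show "ext (Rl X) S Os Is l p x y = ext (\<lambda>x y. (x, y) \<in> G X n) S Os Is l n ((id(p := n)) x) ((id(p := n)) y)"
    proof (cases "x = p \<or> y = p")
      case True then show ?thesis using xy p nS unfolding ext_def by auto
    next
      case False
      then have "x \<in> S" "y \<in> S" using xy by auto
      then have "max x y < n" using Sn by auto
      then show ?thesis using False nS \<open>x \<in> S\<close> \<open>y \<in> S\<close> unfolding ext_def by (auto simp: Rl_G)
    qed
  qed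
  then have v: "valid X (G X n) n" unfolding valid_def using rq Sn by simp
  have k: "\<And>s. s \<in> S \<Longrightarrow> max n s < Suc n" "\<And>s. s \<in> S \<Longrightarrow> max s n < Suc n" "max n n < Suc n"
    using Sn by auto
  show ?thesis
  proof (intro exI conjI ballI)
    show "n \<notin> S" by (rule nS)
    fix s assume s: "s \<in> S"
    show "Rl X n s = (s \<in> Os)" using Rl_G[OF k(1)[OF s]] v rq s Sn nS by (auto simp: cand_def)
    show "Rl X s n = (s \<in> Is)" using Rl_G[OF k(2)[OF s]] v rq s Sn nS by (auto simp: cand_def)
  next
    show "Rl X n n = l" using Rl_G[OF k(3)] v rq by (auto simp: cand_def)
  qed
qed

lemma EPgen:
  assumes fin: "finite D" and p: "p \<notin> D" and inj: "inj_on e D"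
    and agree: "\<And>x y. x \<in> D \<Longrightarrow> y \<in> D \<Longrightarrow> Q x y = Rl X (e x) (e y)"
    and g: "good X Q (insert p D)"
  shows "\<exists>a. a \<notin> e ` D \<and> (\<forall>x\<in>insert p D. \<forall>y\<in>insert p D. Q x y = Rl X ((e(p:=a)) x) ((e(p:=a)) y))"
proof -
  define S where "S = e ` D"
  define Os where "Os = e ` {x\<in>D. Q p x}"
  define Is where "Is = e ` {x\<in>D. Q x p}"
  define l where "l = Q p p"
  have finS: "finite S" using fin S_def by simp
  obtain p' where p': "p' \<notin> S" using ex_new_if_finite[OF infinite_UNIV_nat finS] by blast
  have bij: "bij_betw (e(p:=p')) (insert p D) (insert p' S)"
    unfolding bij_betw_def
  proof
    show "inj_on (e(p := p')) (insert p D)"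
      using inj p p' unfolding S_def inj_on_def by auto
    show "(e(p := p')) ` insert p D = insert p' S" using p unfolding S_def by auto
  qed
  have inO: "\<And>y. y \<in> D \<Longrightarrow> e y \<in> Os \<longleftrightarrow> Q p y" unfolding Os_def using inj by (auto simp: inj_on_def)
  have inI: "\<And>y. y \<in> D \<Longrightarrow> e y \<in> Is \<longleftrightarrow> Q y p" unfolding Is_def using inj by (auto simp: inj_on_def)
  have eS: "\<And>y. y \<in> D \<Longrightarrow> e y \<noteq> p'" using p' S_def by auto
  have "good X (ext (Rl X) S Os Is l p') (insert p' S)"
  proof (rule good_iso[OF g bij])
    fix x y assume xy: "x \<in> insert p D" "y \<in> insert p D"
    show "Q x y = ext (Rl X) S Os Is l p' ((e(p := p')) x) ((e(p := p')) y)"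
      using xy p eS inO inI agree unfolding ext_def l_def by (cases "x = p"; cases "y = p") auto
  qed
  moreover have "Os \<subseteq> S" "Is \<subseteq> S" unfolding Os_def Is_def S_def by auto
  ultimately obtain a where a: "a \<notin> S" "\<forall>s\<in>S. Rl X a s \<longleftrightarrow> s \<in> Os" "\<forall>s\<in>S. Rl X s a \<longleftrightarrow> s \<in> Is" "Rl X a a \<longleftrightarrow> l"
    using EP0[OF finS _ _ p'] by blast
  show ?thesis
  proof (intro exI conjI ballI)
    show "a \<notin> e ` D" using a S_def by simp
    fix x y assume xy: "x \<in> insert p D" "y \<in> insert p D"
    have eD: "\<And>y. y \<in> D \<Longrightarrow> e y \<in> S" using S_def by simp
    show "Q x y = Rl X ((e(p := a)) x) ((e(p := a)) y)"
      using xy p a eD inO inI agree unfolding l_def by (cases "x = p"; cases "y = p") auto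
  qed
qed



definition piso :: "nat set \<Rightarrow> (nat \<Rightarrow> nat) \<Rightarrow> nat set \<Rightarrow> bool" where
  "piso X h D \<longleftrightarrow> inj_on h D \<and> (\<forall>x\<in>D. \<forall>y\<in>D. Rl X x y = Rl X (h x) (h y))"

lemma forth_step:
  assumes fin: "finite D" and pi: "piso X h D"
  shows "\<exists>y. piso X (h(x:=y)) (insert x D)"
proof (cases "x \<in> D")
  case True
  then show ?thesis using pi by (intro exI[of _ "h x"]) (simp add: insert_absorb)
next
  case False
  have g: "good X (Rl X) (insert x D)" by (rule good_mono[OF Rl_good]) auto
  obtain a where a: "a \<notin> h ` D" "\<forall>u\<in>insert x D. \<forall>v\<in>insert x D. Rl X u v = Rl X ((h(x:=a)) u) ((h(x:=a)) v)"
    using EPgen[OF fin False, of h "Rl X" X] pi g unfolding piso_def by blast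
  have "inj_on (h(x:=a)) (insert x D)"
    using pi a(1) False unfolding piso_def inj_on_def by auto
  then show ?thesis using a(2) unfolding piso_def by blast
qed

lemma back_step:
  assumes fin: "finite D" and pi: "piso X h D"
  shows "\<exists>x. piso X (h(x:=y)) (insert x D) \<and> (y \<notin> h ` D \<longrightarrow> x \<notin> D)"
proof (cases "y \<in> h ` D")
  case True
  then obtain x where x: "x \<in> D" "y = h x" by auto
  then show ?thesis using pi by (intro exI[of _ x]) (simp add: insert_absorb)
next
  case False
  define \<psi> where "\<psi> = inv_into D h"
  have injh: "inj_on h D" using pi piso_def by simp
  have finD': "finite (h ` D)" using fin by simp
  have injpsi: "inj_on \<psi> (h ` D)" unfolding \<psi>_def by (rule inj_on_inv_into) simp
  have psih: "\<And>z. z \<in> D \<Longrightarrow> \<psi> (h z) = z" unfolding \<psi>_def using injh by (simp add: inv_into_f_f)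
  have agree: "\<And>u v. u \<in> h ` D \<Longrightarrow> v \<in> h ` D \<Longrightarrow> Rl X u v = Rl X (\<psi> u) (\<psi> v)"
    using pi psih unfolding piso_def by auto
  have g: "good X (Rl X) (insert y (h ` D))" by (rule good_mono[OF Rl_good]) auto
  obtain a where a: "a \<notin> \<psi> ` h ` D"
      "\<forall>u\<in>insert y (h ` D). \<forall>v\<in>insert y (h ` D). Rl X u v = Rl X ((\<psi>(y:=a)) u) ((\<psi>(y:=a)) v)"
    using EPgen[OF finD' False injpsi agree g] by blast
  have aD: "a \<notin> D" using a(1) psih by (metis image_eqI)
  have "piso X (h(a:=y)) (insert a D)"
    unfolding piso_def
  proof (intro conjI ballI)
    show "inj_on (h(a:=y)) (insert a D)" using injh False aD unfolding inj_on_def by auto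
    fix u v assume uv: "u \<in> insert a D" "v \<in> insert a D"
    have hy: "\<And>z. z \<in> D \<Longrightarrow> h z \<noteq> y" using False by auto
    have psi_y: "(\<psi>(y:=a)) y = a" by simp
    have psi_h: "\<And>z. z \<in> D \<Longrightarrow> (\<psi>(y:=a)) (h z) = z" using hy psih by simp
    show "Rl X u v = Rl X ((h(a := y)) u) ((h(a := y)) v)"
    proof (cases "u = a"; cases "v = a")
      assume "u = a" "v = a" then show ?thesis using a(2) by simp
    next
      assume "u = a" "v \<noteq> a" then have "v \<in> D" using uv by simp
      then show ?thesis using a(2) \<open>u = a\<close> \<open>v \<noteq> a\<close> psi_h[of v] by force
    next
      assume "u \<noteq> a" "v = a" then have "u \<in> D" using uv by simp
      then show ?thesis using a(2) \<open>v = a\<close> \<open>u \<noteq> a\<close> psi_h[of u] by force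
    next
      assume "u \<noteq> a" "v \<noteq> a" then have "u \<in> D" "v \<in> D" using uv by auto
      then show ?thesis using pi \<open>u \<noteq> a\<close> \<open>v \<noteq> a\<close> unfolding piso_def by simp
    qed
  qed
  then show ?thesis using aD by blast
qed



definition fwd :: "nat set \<Rightarrow> (nat \<Rightarrow> nat) \<times> nat set \<Rightarrow> nat \<Rightarrow> (nat \<Rightarrow> nat) \<times> nat set" where
  "fwd X st k = (if k \<in> snd st then st else
      ((fst st)(k := SOME y. piso X ((fst st)(k:=y)) (insert k (snd st))), insert k (snd st)))"

definition bwd :: "nat set \<Rightarrow> (nat \<Rightarrow> nat) \<times> nat set \<Rightarrow> nat \<Rightarrow> (nat \<Rightarrow> nat) \<times> nat set" where
  "bwd X st k = (if k \<in> fst st ` snd st then st else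
      (let x = SOME x. piso X ((fst st)(x:=k)) (insert x (snd st)) \<and> x \<notin> snd st
       in ((fst st)(x:=k), insert x (snd st))))"

definition good_step where
  "good_step X st st' \<longleftrightarrow> finite (snd st') \<and> piso X (fst st') (snd st') \<and> snd st \<subseteq> snd st' \<and>
     (\<forall>x\<in>snd st. fst st' x = fst st x)"

lemma fwd_ok:
  assumes "finite (snd st)" "piso X (fst st) (snd st)"
  shows "good_step X st (fwd X st k) \<and> k \<in> snd (fwd X st k)"
proof (cases "k \<in> snd st")
  case True then show ?thesis using assms unfolding fwd_def good_step_def by simp
next
  case False
  let ?y = "SOME y. piso X ((fst st)(k:=y)) (insert k (snd st))"
  have "piso X ((fst st)(k:=?y)) (insert k (snd st))"
    using forth_step[OF assms] by (rule someI_ex)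
  then show ?thesis using False assms unfolding fwd_def good_step_def by auto
qed

lemma bwd_ok:
  assumes "finite (snd st)" "piso X (fst st) (snd st)"
  shows "good_step X st (bwd X st k) \<and> k \<in> fst (bwd X st k) ` snd (bwd X st k)"
proof (cases "k \<in> fst st ` snd st")
  case True then show ?thesis using assms unfolding bwd_def good_step_def by simp
next
  case False
  let ?x = "SOME x. piso X ((fst st)(x:=k)) (insert x (snd st)) \<and> x \<notin> snd st"
  have "\<exists>x. piso X ((fst st)(x:=k)) (insert x (snd st)) \<and> x \<notin> snd st"
    using back_step[OF assms, of k] False by blast
  then have "piso X ((fst st)(?x:=k)) (insert ?x (snd st)) \<and> ?x \<notin> snd st"
    by (rule someI_ex)
  then show ?thesis using False assms unfolding bwd_def good_step_def Let_def by auto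
qed

primrec sq :: "nat set \<Rightarrow> (nat \<Rightarrow> nat) \<Rightarrow> nat set \<Rightarrow> nat \<Rightarrow> (nat \<Rightarrow> nat) \<times> nat set" where
  "sq X h S 0 = (h, S)"
| "sq X h S (Suc k) = bwd X (fwd X (sq X h S k) k) k"

lemma sq_step:
  assumes "finite S" "piso X h S"
  shows "finite (snd (sq X h S k)) \<and> piso X (fst (sq X h S k)) (snd (sq X h S k)) \<and>
    good_step X (sq X h S k) (sq X h S (Suc k)) \<and> k \<in> snd (sq X h S (Suc k)) \<and>
    k \<in> fst (sq X h S (Suc k)) ` snd (sq X h S (Suc k))"
proof (induction k)
  case 0
  have f: "good_step X (h,S) (fwd X (h,S) 0) \<and> 0 \<in> snd (fwd X (h,S) 0)" using fwd_ok[of "(h,S)"] assms by simp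
  then have b: "good_step X (fwd X (h,S) 0) (bwd X (fwd X (h,S) 0) 0) \<and> 0 \<in> fst (bwd X (fwd X (h,S) 0) 0) ` snd (bwd X (fwd X (h,S) 0) 0)"
    using bwd_ok good_step_def by blast
  show ?case using f b assms unfolding good_step_def by auto
next
  case (Suc k)
  let ?s = "sq X h S (Suc k)"
  have i: "finite (snd ?s)" "piso X (fst ?s) (snd ?s)" using Suc good_step_def by auto
  have f: "good_step X ?s (fwd X ?s (Suc k)) \<and> Suc k \<in> snd (fwd X ?s (Suc k))" using fwd_ok i by blast
  then have b: "good_step X (fwd X ?s (Suc k)) (bwd X (fwd X ?s (Suc k)) (Suc k)) \<and>
      Suc k \<in> fst (bwd X (fwd X ?s (Suc k)) (Suc k)) ` snd (bwd X (fwd X ?s (Suc k)) (Suc k))"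
    using bwd_ok good_step_def by blast
  show ?case using i f b unfolding good_step_def by auto
qed

lemma sq_mono:
  assumes "finite S" "piso X h S" "j \<le> k"
  shows "snd (sq X h S j) \<subseteq> snd (sq X h S k) \<and> (\<forall>x\<in>snd (sq X h S j). fst (sq X h S k) x = fst (sq X h S j) x)"
  using assms(3)
proof (induction k rule: dec_induct)
  case base then show ?case by simp
next
  case (step k) then show ?case using sq_step[OF assms(1,2), of k] unfolding good_step_def by auto
qed

declare sq.simps(2)[simp del]

lemma homog_Rl:
  assumes fin: "finite S" and pi: "piso X h S"
  shows "\<exists>g. bij g \<and> (\<forall>x y. Rl X x y = Rl X (g x) (g y)) \<and> (\<forall>x\<in>S. g x = h x)"
proof -
  let ?h = "\<lambda>k. fst (sq X h S k)" and ?D = "\<lambda>k. snd (sq X h S k)"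
  define g where "g x = ?h (Suc x) x" for x
  have inD: "x \<in> ?D (Suc x)" for x using sq_step[OF fin pi, of x] by blast
  have g_eq: "g x = ?h k x" if "x \<in> ?D j" "j \<le> k" "Suc x \<le> k" for x j k
    using sq_mono[OF fin pi that(2)] sq_mono[OF fin pi that(3)] that(1) inD[of x] unfolding g_def by auto
  have g_eq': "g x = ?h k x" if "Suc x \<le> k" for x k using g_eq[OF inD that that] .
  have inDk: "x \<in> ?D k" if "Suc x \<le> k" for x k using sq_mono[OF fin pi that] inD by blast
  have pik: "piso X (?h k) (?D k)" for k using sq_step[OF fin pi] by blast
  show ?thesis
  proof (intro exI conjI allI ballI)
    have "inj g"
    proof (rule injI)
      fix x y assume "g x = g y"
      let ?k = "Suc (max x y)"
      have "?h ?k x = ?h ?k y" using \<open>g x = g y\<close> g_eq'[of x ?k] g_eq'[of y ?k] by simp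
      moreover have "x \<in> ?D ?k" by (rule inDk) simp
    moreover have "y \<in> ?D ?k" by (rule inDk) simp
      ultimately show "x = y" using pik[of ?k] unfolding piso_def inj_on_def by blast
    qed
    moreover have "surj g"
    proof (rule surjI)
      fix y
      have "y \<in> ?h (Suc y) ` ?D (Suc y)" using sq_step[OF fin pi, of y] by blast
      then obtain x where x: "x \<in> ?D (Suc y)" "y = ?h (Suc y) x" by auto
      let ?k = "max (Suc x) (Suc y)"
      have "g x = ?h ?k x" using g_eq[OF x(1)] by simp
      also have "\<dots> = ?h (Suc y) x" using sq_mono[OF fin pi, of "Suc y" ?k] x(1) by simp
      finally show "g (SOME x. g x = y) = y" using x(2) by (metis (mono_tags) someI_ex)
    qed
    ultimately show "bij g" by (rule bijI)
    fix x y
    let ?k = "Suc (max x y)"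
    have "x \<in> ?D ?k" by (rule inDk) simp
    moreover have "y \<in> ?D ?k" by (rule inDk) simp
    ultimately show "Rl X x y = Rl X (g x) (g y)" using pik[of ?k] g_eq'[of x ?k] g_eq'[of y ?k] unfolding piso_def by simp
  next
    fix x assume "x \<in> S"
    then have "x \<in> ?D 0" by simp
    then have "g x = ?h (Suc x) x" using g_eq[of x 0 "Suc x"] by simp
    also have "\<dots> = ?h 0 x" using sq_mono[OF fin pi, of 0 "Suc x"] \<open>x \<in> ?D 0\<close> by simp
    finally show "g x = h x" by simp
  qed
qed



lemma good_cyc: assumes "\<not> bad X n" shows "good X (CR n) {..<n}"
  unfolding good_def
proof
  assume "\<exists>m e. bad X m \<and> copy (CR n) {..<n} m e"
  then obtain m e where "bad X m" "copy (CR n) {..<n} m e" by blast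
  moreover then have "m = n" using antichain bad_def by blast
  ultimately show False using assms by simp
qed

lemma build_copy:
  assumes "\<not> bad X n"
  shows "\<exists>e. copy (Rl X) UNIV n e"
proof -
  have g: "good X (CR n) {..<n}" by (rule good_cyc[OF assms])
  have "j \<le> n \<Longrightarrow> \<exists>e. inj_on e {..<j} \<and> (\<forall>x<j. \<forall>y<j. CR n x y = Rl X (e x) (e y))" for j
  proof (induction j)
    case 0 then show ?case by simp
  next
    case (Suc j)
    then obtain e where e: "inj_on e {..<j}" "\<forall>x<j. \<forall>y<j. CR n x y = Rl X (e x) (e y)" by auto
    have gj: "good X (CR n) (insert j {..<j})" by (rule good_mono[OF g]) (use Suc in auto)
    obtain a where a: "a \<notin> e ` {..<j}"
      "\<forall>x\<in>insert j {..<j}. \<forall>y\<in>insert j {..<j}. CR n x y = Rl X ((e(j:=a)) x) ((e(j:=a)) y)"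
      using EPgen[of "{..<j}" j e "CR n" X] e gj by auto
    have "inj_on (e(j:=a)) {..<Suc j}" using e(1) a(1) unfolding inj_on_def by (auto simp: less_Suc_eq)
    moreover have "\<forall>x<Suc j. \<forall>y<Suc j. CR n x y = Rl X ((e(j:=a)) x) ((e(j:=a)) y)"
      using a(2) by (auto simp: less_Suc_eq)
    ultimately show ?case by blast
  qed
  then obtain e where "inj_on e {..<n}" "\<forall>x<n. \<forall>y<n. CR n x y = Rl X (e x) (e y)" by blast
  then show ?thesis unfolding copy_def by auto
qed

lemma set_qlist: "set (qlist j) = {[i, Suc i] | i. i < j}"
  by (induction j) (auto simp: less_Suc_eq)

lemma cyc_CR: assumes "3 \<le> n" "x < n" "y < n" shows "[x,y] \<in> set (cyc n) \<longleftrightarrow> CR n x y"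
proof (cases "x = n - 1")
  case True then show ?thesis using assms unfolding cyc_def CR_def by (auto simp: set_qlist)
next
  case False
  then have "Suc x < n" using assms by simp
  then show ?thesis using assms False unfolding cyc_def CR_def by (auto simp: set_qlist)
qed

definition AX :: "nat set \<Rightarrow> nat rstruct" where
  "AX X = \<lparr>carrier = UNIV, rel = (\<lambda>i xs. i = 0 \<and> length xs = 2 \<and> Rl X (xs!0) (xs!1))\<rparr>"

lemma len2: "length xs = 2 \<longleftrightarrow> (\<exists>a b. xs = [a,b])"
  by (auto simp: length_Suc_conv numeral_2_eq_2)

lemma decode_fcode:
  "decode_struct [2] (fcode k) = \<lparr>carrier = {..<k+3}, rel = (\<lambda>i xs. i = 0 \<and> length xs = 2 \<and> set xs \<subseteq> {..<k+3} \<and> xs \<in> set (cyc (k+3)))\<rparr>"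
  unfolding decode_struct_def fcode_def
  by (auto simp: Let_def inj_image_mem_iff[OF inj_list_encode] intro!: ext)

lemma embeds_iff: "embeds [2] (decode_struct [2] (fcode k)) (AX X) \<longleftrightarrow> (\<exists>e. copy (Rl X) UNIV (k+3) e)"
proof -
  let ?n = "k+3"
  have "(\<forall>i<length [2::nat]. \<forall>xs. length xs = [2::nat] ! i \<and> set xs \<subseteq> {..<?n} \<longrightarrow>
          (rel (decode_struct [2] (fcode k)) i xs \<longleftrightarrow> rel (AX X) i (map e xs)))
        \<longleftrightarrow> (\<forall>x<?n. \<forall>y<?n. Rl X (e x) (e y) \<longleftrightarrow> CR ?n x y)" for e
  proof
    assume h: "\<forall>i<length [2::nat]. \<forall>xs. length xs = [2::nat] ! i \<and> set xs \<subseteq> {..<?n} \<longrightarrow>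
          (rel (decode_struct [2] (fcode k)) i xs \<longleftrightarrow> rel (AX X) i (map e xs))"
    show "\<forall>x<?n. \<forall>y<?n. Rl X (e x) (e y) \<longleftrightarrow> CR ?n x y"
    proof (intro allI impI)
      fix x y assume "x < ?n" "y < ?n"
      then show "Rl X (e x) (e y) \<longleftrightarrow> CR ?n x y"
        using h[rule_format, of 0 "[x,y]"] cyc_CR[of ?n x y] by (simp add: decode_fcode AX_def)
    qed
  next
    assume h: "\<forall>x<?n. \<forall>y<?n. Rl X (e x) (e y) \<longleftrightarrow> CR ?n x y"
    show "\<forall>i<length [2::nat]. \<forall>xs. length xs = [2::nat] ! i \<and> set xs \<subseteq> {..<?n} \<longrightarrow>
          (rel (decode_struct [2] (fcode k)) i xs \<longleftrightarrow> rel (AX X) i (map e xs))"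
    proof (intro allI impI)
      fix i xs assume i: "i < length [2::nat]" and xs: "length xs = [2::nat] ! i \<and> set xs \<subseteq> {..<?n}"
      then obtain x y where xy: "xs = [x,y]" "x < ?n" "y < ?n" by (auto simp: len2)
      show "rel (decode_struct [2] (fcode k)) i xs \<longleftrightarrow> rel (AX X) i (map e xs)"
        using i xy h cyc_CR[of ?n x y] by (simp add: decode_fcode AX_def)
    qed
  qed
  then show ?thesis unfolding embeds_def copy_def by (auto simp: decode_fcode AX_def)
qed

theorem theorem9:
  fixes X :: "nat set"
  shows "\<exists>(sig :: nat list) (A :: nat rstruct).
           struct_on sig A \<and> homogeneous sig A \<and> many_one_reducible X (ISP sig A)"
proof (intro exI conjI)
  show "struct_on [2] (AX X)" unfolding struct_on_def AX_def by simp
  show "homogeneous [2] (AX X)"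
    unfolding homogeneous_def
  proof (intro allI impI)
    fix h S T assume a: "finite S \<and> finite T \<and> partial_iso [2] (AX X) h S T"
    then have pi: "bij_betw h S T" "\<forall>xs. length xs = 2 \<and> set xs \<subseteq> S \<longrightarrow> (rel (AX X) 0 xs \<longleftrightarrow> rel (AX X) 0 (map h xs))"
      unfolding partial_iso_def by auto
    have "piso X h S" unfolding piso_def
    proof (intro conjI ballI)
      show "inj_on h S" using pi(1) bij_betw_def by blast
      fix x y assume "x \<in> S" "y \<in> S"
      then show "Rl X x y = Rl X (h x) (h y)" using pi(2)[rule_format, of "[x,y]"] by (simp add: AX_def)
    qed
    then obtain g where g: "bij g" "\<forall>x y. Rl X x y = Rl X (g x) (g y)" "\<forall>x\<in>S. g x = h x"
      using homog_Rl a by blast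
    have "automorphism [2] (AX X) g"
      unfolding automorphism_def partial_iso_def
    proof (intro conjI allI impI)
      show "bij_betw g (carrier (AX X)) (carrier (AX X))" using g(1) by (simp add: AX_def)
      fix i xs assume "i < length [2::nat]" "length xs = [2::nat] ! i \<and> set xs \<subseteq> carrier (AX X)"
      then obtain x y where "i = 0" "xs = [x,y]" by (auto simp: len2)
      then show "rel (AX X) i xs = rel (AX X) i (map g xs)" using g(2) by (simp add: AX_def)
    qed (auto simp: AX_def)
    then show "\<exists>g. automorphism [2] (AX X) g \<and> (\<forall>x\<in>S. g x = h x)" using g(3) by blast
  qed
  show "many_one_reducible X (ISP [2] (AX X))"
    unfolding many_one_reducible_def
  proof (intro exI conjI allI)
    show "computable fcode" by (rule computable_fcode)
    fix k
    show "k \<in> X \<longleftrightarrow> fcode k \<in> ISP [2] (AX X)"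
    proof
      assume "k \<in> X"
      then have "\<not> bad X (k+3)" unfolding bad_def by simp
      then show "fcode k \<in> ISP [2] (AX X)" using build_copy embeds_iff unfolding ISP_def by blast
    next
      assume "fcode k \<in> ISP [2] (AX X)"
      then obtain e where "copy (Rl X) UNIV (k+3) e" using embeds_iff unfolding ISP_def by blast
      then have "\<not> bad X (k+3)" using Rl_good good_def by blast
      then show "k \<in> X" unfolding bad_def by simp
    qed
  qed
qed


end
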